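(* If $\mathcal F=(X,\le,R,S)$ is a WHB-frame, then $\mathcal A(\mathcal F)=(\mathrm{Up}(X),\cap,\cup,\Rightarrow_R,\Leftarrow_S,\emptyset,X)$ is a WHB-algebra.
   Context: A WHB-frame is $(X,\le,R,S)$ with $\le$ a partial order on $X$ and $R,S$ binary relations on $X$ such that: if $x\le y$ and $(y,z)\in R$ then $(x,z)\in R$; if $x\le y$ and $(x,z)\in S$ then $(y,z)\in S$; and $S=R^{-1}$ (i.e. $(x,y)\in S$ iff $(y,x)\in R$). $\mathrm{Up}(X)$ is the set of upsets of $(X,\le)$; for $U,V\in\mathrm{Up}(X)$, $U\Rightarrow_R V=\{x\colon R(x)\cap U\subseteq V\}$ and $U\Leftarrow_S V=\{x\colon S(x)\cap(U\setminus V)\neq\emptyset\}$, where $\mathcal R(x)=\{y\colon(x,y)\in\mathcal R\}$. A WHB-algebra is an algebra $(A,\wedge,\vee,\to,\leftarrow,0,1)$ such that $(A,\wedge,\vee,0,1)$ is a bounded distributive lattice and for all $a,b,c\in A$: $a\to a=1$; $a\to(b\wedge c)=(a\to b)\wedge(a\to c)$; $(a\vee b)\to c=(a\to c)\wedge(b\to c)$; $(a\to b)\wedge(b\to c)\le a\to c$; $a\leftarrow a=0$; $(a\vee b)\leftarrow c=(a\leftarrow c)\vee(b\leftarrow c)$; $a\leftarrow(b\wedge c)=(a\leftarrow b)\vee(a\leftarrow c)$; $a\leftarrow c\le(a\leftarrow b)\vee(b\leftarrow c)$; $a\wedge((a\to b)\leftarrow 0)\le b$; $a\le b\vee(1\to(a\leftarrow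 b))$. *)

theory Defs
  imports Main
begin

definition partial_order_on_set :: "'a set \<Rightarrow> ('a \<times> 'a) set \<Rightarrow> bool" where
  "partial_order_on_set X le \<longleftrightarrow>
     le \<subseteq> X \<times> X \<and>
     (\<forall>x\<in>X. (x, x) \<in> le) \<and>
     (\<forall>x y. (x, y) \<in> le \<and> (y, x) \<in> le \<longrightarrow> x = y) \<and>
     (\<forall>x y z. (x, y) \<in> le \<and> (y, z) \<in> le \<longrightarrow> (x, z) \<in> le)"

definition WHB_frame :: "'a set \<Rightarrow> ('a \<times> 'a) set \<Rightarrow> ('a \<times> 'a) set \<Rightarrow> ('a \<times> 'a) set \<Rightarrow> bool" where
  "WHB_frame X le R S \<longleftrightarrow>
     partial_order_on_set X le \<and> R \<subseteq> X \<times> X \<and> S \<subseteq> X \<times> X \<and>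
     (\<forall>x y z. (x, y) \<in> le \<and> (y, z) \<in> R \<longrightarrow> (x, z) \<in> R) \<and>
     (\<forall>x y z. (x, y) \<in> le \<and> (x, z) \<in> S \<longrightarrow> (y, z) \<in> S) \<and>
     S = R\<inverse>"

definition Up :: "'a set \<Rightarrow> ('a \<times> 'a) set \<Rightarrow> 'a set set" where
  "Up X le = {U. U \<subseteq> X \<and> (\<forall>x y. x \<in> U \<and> (x, y) \<in> le \<longrightarrow> y \<in> U)}"

definition rimp :: "'a set \<Rightarrow> ('a \<times> 'a) set \<Rightarrow> 'a set \<Rightarrow> 'a set \<Rightarrow> 'a set" where
  "rimp X R U V = {x \<in> X. R `` {x} \<inter> U \<subseteq> V}"

definition lcoimp :: "'a set \<Rightarrow> ('a \<times> 'a) set \<Rightarrow> 'a set \<Rightarrow> 'a set \<Rightarrow> 'a set" where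
  "lcoimp X S U V = {x \<in> X. S `` {x} \<inter> (U - V) \<noteq> {}}"

definition WHB_algebra ::
  "'b set \<Rightarrow> ('b \<Rightarrow> 'b \<Rightarrow> 'b) \<Rightarrow> ('b \<Rightarrow> 'b \<Rightarrow> 'b) \<Rightarrow> ('b \<Rightarrow> 'b \<Rightarrow> 'b) \<Rightarrow> ('b \<Rightarrow> 'b \<Rightarrow> 'b)
   \<Rightarrow> 'b \<Rightarrow> 'b \<Rightarrow> bool" where
  "WHB_algebra A meet join imp coimp zer one \<longleftrightarrow>
    \<comment> \<open>closure\<close>
    zer \<in> A \<and> one \<in> A \<and>
    (\<forall>a\<in>A. \<forall>b\<in>A. meet a b \<in> A \<and> join a b \<in> A \<and> imp a b \<in> A \<and> coimp a b \<in> A) \<and>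
    \<comment> \<open>bounded distributive lattice\<close>
    (\<forall>a\<in>A. \<forall>b\<in>A. meet a b = meet b a \<and> join a b = join b a) \<and>
    (\<forall>a\<in>A. \<forall>b\<in>A. \<forall>c\<in>A. meet a (meet b c) = meet (meet a b) c \<and> join a (join b c) = join (join a b) c) \<and>
    (\<forall>a\<in>A. \<forall>b\<in>A. meet a (join a b) = a \<and> join a (meet a b) = a) \<and>
    (\<forall>a\<in>A. \<forall>b\<in>A. \<forall>c\<in>A. meet a (join b c) = join (meet a b) (meet a c)) \<and>
    (\<forall>a\<in>A. meet a zer = zer \<and> join a one = one) \<and>
    \<comment> \<open>axioms; a \<le> b means meet a b = a\<close>
    (\<forall>a\<in>A. imp a a = one) \<and>
    (\<forall>a\<in>A. \<forall>b\<in>A. \<forall>c\<in>A. imp a (meet b c) = meet (imp a b) (imp a c)) \<and>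
    (\<forall>a\<in>A. \<forall>b\<in>A. \<forall>c\<in>A. imp (join a b) c = meet (imp a c) (imp b c)) \<and>
    (\<forall>a\<in>A. \<forall>b\<in>A. \<forall>c\<in>A. meet (meet (imp a b) (imp b c)) (imp a c) = meet (imp a b) (imp b c)) \<and>
    (\<forall>a\<in>A. coimp a a = zer) \<and>
    (\<forall>a\<in>A. \<forall>b\<in>A. \<forall>c\<in>A. coimp (join a b) c = join (coimp a c) (coimp b c)) \<and>
    (\<forall>a\<in>A. \<forall>b\<in>A. \<forall>c\<in>A. coimp a (meet b c) = join (coimp a b) (coimp a c)) \<and>
    (\<forall>a\<in>A. \<forall>b\<in>A. \<forall>c\<in>A. meet (coimp a c) (join (coimp a b) (coimp b c)) = coimp a c) \<and>
    (\<forall>a\<in>A. \<forall>b\<in>A. meet (meet a (coimp (imp a b) zer)) b = meet a (coimp (imp a b) zer)) \<and>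
    (\<forall>a\<in>A. \<forall>b\<in>A. meet a (join b (imp one (coimp a b))) = a)"

end

theory Submission
  imports Defs
begin

theorem theorem4p7:
  fixes X :: "'a set" and le R S :: "('a \<times> 'a) set"
  assumes "WHB_frame X le R S"
  shows "WHB_algebra (Up X le) (\<inter>) (\<union>) (rimp X R) (lcoimp X S) {} X"
proof -
  have po: "partial_order_on_set X le" and RX: "R \<subseteq> X \<times> X"
    and m1: "\<And>x y z. (x, y) \<in> le \<Longrightarrow> (y, z) \<in> R \<Longrightarrow> (x, z) \<in> R"
    and m2: "\<And>x y z. (x, y) \<in> le \<Longrightarrow> (x, z) \<in> S \<Longrightarrow> (y, z) \<in> S"
    and SR: "S = R\<inverse>"
    using assms unfolding WHB_frame_def by blast+
  have leX: "le \<subseteq> X \<times> X" using po unfolding partial_order_on_set_def by blast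
  have cl1: "rimp X R a b \<in> Up X le" for a b
    unfolding Up_def rimp_def using leX m1 by blast
  have cl2: "lcoimp X S a b \<in> Up X le" for a b
    unfolding Up_def lcoimp_def using leX m2 by blast
  have X: "X \<in> Up X le" using leX unfolding Up_def by blast
  have E: "{} \<in> Up X le" unfolding Up_def by blast
  have I: "a \<inter> b \<in> Up X le" "a \<union> b \<in> Up X le" if "a \<in> Up X le" "b \<in> Up X le" for a b
    using that unfolding Up_def by blast+
  have sub: "a \<subseteq> X" if "a \<in> Up X le" for a using that unfolding Up_def by blast
  have a1: "rimp X R a a = X" for a unfolding rimp_def by blast
  have a2: "rimp X R a (b \<inter> c) = rimp X R a b \<inter> rimp X R a c" for a b c unfolding rimp_def by blast
  have a3: "rimp X R (a \<union> b) c = rimp X R a c \<inter> rimp X R b c" for a b c unfolding rimp_def by blast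
  have a4: "rimp X R a b \<inter> rimp X R b c \<inter> rimp X R a c = rimp X R a b \<inter> rimp X R b c" for a b c
    unfolding rimp_def by blast
  have a5: "lcoimp X S a a = {}" for a unfolding lcoimp_def by blast
  have a6: "lcoimp X S (a \<union> b) c = lcoimp X S a c \<union> lcoimp X S b c" for a b c unfolding lcoimp_def by blast
  have a7: "lcoimp X S a (b \<inter> c) = lcoimp X S a b \<union> lcoimp X S a c" for a b c unfolding lcoimp_def by blast
  have a8: "lcoimp X S a c \<inter> (lcoimp X S a b \<union> lcoimp X S b c) = lcoimp X S a c" for a b c
    unfolding lcoimp_def by blast
  have a9: "a \<inter> lcoimp X S (rimp X R a b) {} \<inter> b = a \<inter> lcoimp X S (rimp X R a b) {}" for a b
    unfolding lcoimp_def rimp_def SR by blast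
  have a10: "a \<inter> (b \<union> rimp X R X (lcoimp X S a b)) = a" if "a \<subseteq> X" for a b
    using that RX unfolding lcoimp_def rimp_def SR by blast
  show ?thesis
    unfolding WHB_algebra_def
    apply (intro conjI ballI)
                        apply (simp_all only: cl1 cl2 X E I sub a1 a2 a3 a4 a5 a6 a7 a8 a9 a10)
    apply (simp_all add: Int_commute Un_commute Int_Un_distrib)
    by (blast dest: sub)+
qed

end
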